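(* Let $\Gamma=([n],E)$ be a connected simple graph. Then the polytopes $$Q_{\Gamma}=\sum_{\substack{S\subseteq[n]\\ \Gamma|_S\text{ connected}}}\Delta_S\qquad\text{and}\qquad Q^L_{\Gamma}=\sum_{\substack{S\subseteq[n]\\ \Gamma|_S\cong L_{|S|}}}\Delta_S$$ are normally equivalent, i.e. their normal fans coincide.
   Context: $L_r$ is the path graph on $r$ vertices and $\Gamma|_S$ is the induced subgraph on $S$; the sums are Minkowski sums over nonempty subsets $S$. For nonempty $S\subseteq[n]$, $\Delta_S=\mathrm{conv}\{e_s:s\in S\}\subset\mathbb{R}^n$, where $e_s$ are the standard basis vectors. *)

theory Defs
  imports "HOL-Analysis.Analysis" "HOL-Library.Set_Algebras"
begin

text \<open>A simple graph on the finite vertex type 'n (playing the role of [n]) is given by an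
  edge relation E that is symmetric and irreflexive.\<close>
definition simple_graph :: "('n \<Rightarrow> 'n \<Rightarrow> bool) \<Rightarrow> bool" where
  "simple_graph E \<longleftrightarrow> (\<forall>u v. E u v \<longrightarrow> E v u) \<and> (\<forall>v. \<not> E v v)"

definition induced_connected :: "('n \<Rightarrow> 'n \<Rightarrow> bool) \<Rightarrow> 'n set \<Rightarrow> bool" where
  "induced_connected E S \<longleftrightarrow> S \<noteq> {} \<and>
     (\<forall>u\<in>S. \<forall>v\<in>S. (\<lambda>x y. x \<in> S \<and> y \<in> S \<and> E x y)\<^sup>*\<^sup>* u v)"

definition connected_graph :: "('n \<Rightarrow> 'n \<Rightarrow> bool) \<Rightarrow> bool" where
  "connected_graph E \<longleftrightarrow> induced_connected E UNIV"

definition path_graph_edge :: "nat \<Rightarrow> nat \<Rightarrow> bool" where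
  "path_graph_edge i j \<longleftrightarrow> i + 1 = j \<or> j + 1 = i"

definition induced_path :: "('n \<Rightarrow> 'n \<Rightarrow> bool) \<Rightarrow> 'n set \<Rightarrow> bool" where
  "induced_path E S \<longleftrightarrow> S \<noteq> {} \<and>
     (\<exists>f. bij_betw f {0..<card S} S \<and>
          (\<forall>i<card S. \<forall>j<card S. E (f i) (f j) \<longleftrightarrow> path_graph_edge i j))"

definition simplex_of :: "'n set \<Rightarrow> (real ^ 'n::finite) set" where
  "simplex_of S = convex hull ((\<lambda>s. axis s 1) ` S)"

definition Q_graph :: "('n::finite \<Rightarrow> 'n \<Rightarrow> bool) \<Rightarrow> (real ^ 'n) set" where
  "Q_graph E = (\<Sum>S\<in>{S. induced_connected E S}. simplex_of S)"

definition QL_graph :: "('n::finite \<Rightarrow> 'n \<Rightarrow> bool) \<Rightarrow> (real ^ 'n) set" where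
  "QL_graph E = (\<Sum>S\<in>{S. induced_path E S}. simplex_of S)"

definition normal_cone :: "(real ^ 'n) set \<Rightarrow> (real ^ 'n) set \<Rightarrow> (real ^ 'n) set" where
  "normal_cone P F = {w. \<forall>x\<in>F. \<forall>y\<in>P. inner w y \<le> inner w x}"

definition normal_fan :: "(real ^ 'n) set \<Rightarrow> (real ^ 'n) set set" where
  "normal_fan P = {normal_cone P F | F. F face_of P \<and> F \<noteq> {}}"

definition normally_equivalent :: "(real ^ 'n) set \<Rightarrow> (real ^ 'n) set \<Rightarrow> bool" where
  "normally_equivalent P Q \<longleftrightarrow> normal_fan P = normal_fan Q"

end

theory Submission
  imports Defs
begin


definition amax :: "(real ^ 'n) set \<Rightarrow> real ^ 'n \<Rightarrow> (real ^ 'n) set" where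
  "amax P w = {x\<in>P. \<forall>y\<in>P. inner w y \<le> inner w x}"

lemma normal_cone_eq: "F \<subseteq> P \<Longrightarrow> normal_cone P F = {w'. F \<subseteq> amax P w'}"
  unfolding normal_cone_def amax_def by auto

lemma amax_nonempty:
  assumes "polytope P" "P \<noteq> {}" shows "amax P w \<noteq> {}"
proof -
  have "compact P" using assms polytope_imp_compact by blast
  moreover have "continuous_on P (\<lambda>x. inner w x)" by (intro continuous_intros)
  ultimately obtain x where "x \<in> P" "\<forall>y\<in>P. inner w y \<le> inner w x"
    using continuous_attains_sup[of P "\<lambda>x. inner w x"] assms by blast
  then show ?thesis unfolding amax_def by blast
qed

lemma amax_face:
  assumes "polytope P" "P \<noteq> {}" shows "amax P w face_of P"
proof -
  obtain x where x: "x \<in> amax P w" using amax_nonempty[OF assms] by blast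
  have eq: "amax P w = P \<inter> {y. w \<bullet> y = w \<bullet> x}"
    using x unfolding amax_def by (auto intro: order.antisym)
  have "(P \<inter> {y. w \<bullet> y = w \<bullet> x}) face_of P"
    by (rule face_of_Int_supporting_hyperplane_le) (use assms x in \<open>auto simp: polytope_imp_convex amax_def\<close>)
  then show ?thesis using eq by simp
qed

lemma face_is_amax:
  assumes "polytope P" "F face_of P" "F \<noteq> {}" shows "\<exists>w. F = amax P w"
proof -
  have "F exposed_face_of P"
    using assms exposed_face_of_polyhedron polytope_imp_polyhedron by blast
  then have "F = P \<or> (\<exists>a b. a \<noteq> 0 \<and> P \<subseteq> {x. a \<bullet> x \<le> b} \<and> F = P \<inter> {x. a \<bullet> x = b})"
    using assms(3) unfolding exposed_face_of by blast
  then show ?thesis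
  proof
    assume "F = P" then have "F = amax P 0" unfolding amax_def by auto
    then show ?thesis by blast
  next
    assume "\<exists>a b. a \<noteq> 0 \<and> P \<subseteq> {x. a \<bullet> x \<le> b} \<and> F = P \<inter> {x. a \<bullet> x = b}"
    then obtain a b where ab: "P \<subseteq> {x. a \<bullet> x \<le> b}" "F = P \<inter> {x. a \<bullet> x = b}" by blast
    obtain z where z: "z \<in> F" using assms(3) by blast
    have "F = amax P a"
      unfolding amax_def using ab z by (auto intro: order.antisym)
    then show ?thesis by blast
  qed
qed

lemma normal_fan_amax:
  assumes "polytope P" "P \<noteq> {}"
  shows "normal_fan P = {{w'. amax P w \<subseteq> amax P w'} | w. True}"
proof -
  have sub: "amax P w \<subseteq> P" for w unfolding amax_def by auto
  show ?thesis
    unfolding normal_fan_def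
  proof (intro set_eqI iffI)
    fix C assume "C \<in> {normal_cone P F |F. F face_of P \<and> F \<noteq> {}}"
    then obtain F where F: "C = normal_cone P F" "F face_of P" "F \<noteq> {}" by blast
    obtain w where "F = amax P w" using face_is_amax[OF assms(1) F(2,3)] by blast
    then show "C \<in> {{w'. amax P w \<subseteq> amax P w'} | w. True}"
      using F(1) normal_cone_eq[OF sub] by blast
  next
    fix C assume "C \<in> {{w'. amax P w \<subseteq> amax P w'} | w. True}"
    then obtain w where "C = {w'. amax P w \<subseteq> amax P w'}" by blast
    then have "C = normal_cone P (amax P w)" using normal_cone_eq[OF sub] by blast
    then show "C \<in> {normal_cone P F |F. F face_of P \<and> F \<noteq> {}}"
      using amax_face[OF assms] amax_nonempty[OF assms] by blast
  qed
qed



definition good :: "(real ^ 'n) set \<Rightarrow> bool" where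
  "good P \<longleftrightarrow> (\<forall>w. amax P w \<noteq> {})"

lemma amax_plus:
  assumes "good A" "good B"
  shows "amax (A + B) w = amax A w + amax B w"
proof (intro set_eqI iffI)
  fix x assume x: "x \<in> amax (A + B) w"
  then obtain a b where ab: "a \<in> A" "b \<in> B" "x = a + b" "\<forall>y\<in>A+B. inner w y \<le> inner w x"
    unfolding amax_def set_plus_def by blast
  obtain a0 where a0: "a0 \<in> amax A w" using assms(1) unfolding good_def by blast
  obtain b0 where b0: "b0 \<in> amax B w" using assms(2) unfolding good_def by blast
  have "a0 + b \<in> A + B" using a0 ab unfolding amax_def set_plus_def by blast
  then have "inner w (a0 + b) \<le> inner w (a + b)" using ab by auto
  then have "inner w a0 \<le> inner w a" by (simp add: inner_add_right)
  then have "a \<in> amax A w" using a0 ab unfolding amax_def by force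
  have "a + b0 \<in> A + B" using b0 ab unfolding amax_def set_plus_def by blast
  then have "inner w (a + b0) \<le> inner w (a + b)" using ab by auto
  then have "inner w b0 \<le> inner w b" by (simp add: inner_add_right)
  then have "b \<in> amax B w" using b0 ab unfolding amax_def by force
  show "x \<in> amax A w + amax B w" using \<open>a \<in> amax A w\<close> \<open>b \<in> amax B w\<close> ab(3)
    by (auto simp: set_plus_def)
next
  fix x assume "x \<in> amax A w + amax B w"
  then obtain a b where ab: "a \<in> amax A w" "b \<in> amax B w" "x = a + b"
    unfolding set_plus_def by blast
  show "x \<in> amax (A + B) w"
    unfolding amax_def
  proof (intro CollectI conjI ballI)
    show "x \<in> A + B" using ab unfolding amax_def set_plus_def by blast
    fix y assume "y \<in> A + B"
    then obtain a' b' where "a' \<in> A" "b' \<in> B" "y = a' + b'" unfolding set_plus_def by blast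
    then show "inner w y \<le> inner w x" using ab unfolding amax_def
      by (auto simp: inner_add_right intro: add_mono)
  qed
qed

lemma good_plus: "good A \<Longrightarrow> good B \<Longrightarrow> good (A + B)"
proof -
  assume a: "good A" "good B"
  show "good (A + B)" unfolding good_def
  proof
    fix w
    obtain x y where "x \<in> amax A w" "y \<in> amax B w" using a unfolding good_def by blast
    then have "x + y \<in> amax A w + amax B w" by (rule set_plus_intro)
    then show "amax (A + B) w \<noteq> {}" using amax_plus[OF a] by auto
  qed
qed

lemma rel_plus:
  assumes "good A" "good B"
  shows "(amax (A + B) w \<subseteq> amax (A + B) w') \<longleftrightarrow>
         (amax A w \<subseteq> amax A w' \<and> amax B w \<subseteq> amax B w')"
proof
  assume "amax A w \<subseteq> amax A w' \<and> amax B w \<subseteq> amax B w'"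
  then show "amax (A + B) w \<subseteq> amax (A + B) w'"
    unfolding amax_plus[OF assms] by (intro set_plus_mono2) auto
next
  assume H: "amax (A + B) w \<subseteq> amax (A + B) w'"
  have key: "a \<in> amax A w' \<and> b \<in> amax B w'" if "a \<in> amax A w" "b \<in> amax B w" for a b
  proof -
    have "a + b \<in> amax A w + amax B w" using that by (rule set_plus_intro)
    then have "a + b \<in> amax A w' + amax B w'"
      using H unfolding amax_plus[OF assms] by blast
    then obtain a' b' where ab': "a' \<in> amax A w'" "b' \<in> amax B w'" "a + b = a' + b'"
      unfolding set_plus_def by blast
    have aA: "a \<in> A" "b \<in> B" using that unfolding amax_def by auto
    have le1: "inner w' a \<le> inner w' a'" and le2: "inner w' b \<le> inner w' b'"
      using ab' aA unfolding amax_def by auto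
    have "inner w' a + inner w' b = inner w' a' + inner w' b'"
      using ab'(3) by (metis inner_add_right)
    then have "inner w' a = inner w' a'" "inner w' b = inner w' b'" using le1 le2 by linarith+
    then show ?thesis using ab'(1,2) aA unfolding amax_def by auto
  qed
  obtain a0 where "a0 \<in> amax A w" using assms(1) unfolding good_def by blast
  obtain b0 where "b0 \<in> amax B w" using assms(2) unfolding good_def by blast
  show "amax A w \<subseteq> amax A w' \<and> amax B w \<subseteq> amax B w'"
    using key \<open>a0 \<in> amax A w\<close> \<open>b0 \<in> amax B w\<close> by blast
qed

lemma good_zero: "good (0 :: (real ^ 'n) set)"
  unfolding good_def amax_def by auto

lemma sum_family:
  fixes f :: "'i \<Rightarrow> (real ^ 'n) set"
  assumes "finite I" "\<forall>i\<in>I. good (f i)"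
  shows "good (sum f I) \<and>
    ((amax (sum f I) w \<subseteq> amax (sum f I) w') \<longleftrightarrow> (\<forall>i\<in>I. amax (f i) w \<subseteq> amax (f i) w'))"
  using assms
proof (induction I rule: finite_induct)
  case empty
  then show ?case using good_zero by (auto simp: amax_def)
next
  case (insert i I)
  then have g: "good (f i)" "good (sum f I)" by auto
  have "sum f (insert i I) = f i + sum f I" using insert(1,2) by simp
  then show ?case using rel_plus[OF g] good_plus[OF g] insert by auto
qed



lemma hull_le:
  assumes "\<forall>v\<in>V. inner w v \<le> c" "y \<in> convex hull V"
  shows "inner w y \<le> c"
proof -
  have "convex hull V \<subseteq> {x. inner w x \<le> c}"
    by (rule hull_minimal) (use assms(1) convex_halfspace_le in auto)
  then show ?thesis using assms(2) by auto
qed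

lemma amax_V_hull: "v \<in> amax V w \<Longrightarrow> v \<in> amax (convex hull V) w"
  unfolding amax_def using hull_le[of V w] hull_inc[of _ V] by auto

lemma polytope_hull: "finite V \<Longrightarrow> polytope (convex hull V)"
  unfolding polytope_def by blast

lemma good_hull: "finite V \<Longrightarrow> V \<noteq> {} \<Longrightarrow> good (convex hull V)"
  unfolding good_def using amax_nonempty polytope_hull by fastforce

lemma amax_finite_nonempty:
  assumes "finite (V :: (real^'n) set)" "V \<noteq> {}" shows "amax V w \<noteq> {}"
proof -
  have "compact V" using assms by (simp add: finite_imp_compact)
  moreover have "continuous_on V (\<lambda>x. inner w x)" by (intro continuous_intros)
  ultimately obtain x where "x \<in> V" "\<forall>y\<in>V. inner w y \<le> inner w x"
    using continuous_attains_sup[of V "\<lambda>x. inner w x"] assms by blast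
  then show ?thesis unfolding amax_def by blast
qed

lemma hull_rel:
  assumes "finite (V :: (real^'n) set)" "V \<noteq> {}"
  shows "(amax (convex hull V) w \<subseteq> amax (convex hull V) w') \<longleftrightarrow> (amax V w \<subseteq> amax V w')"
proof
  assume H: "amax (convex hull V) w \<subseteq> amax (convex hull V) w'"
  show "amax V w \<subseteq> amax V w'"
  proof
    fix v assume "v \<in> amax V w"
    then have "v \<in> amax (convex hull V) w'" using H amax_V_hull by blast
    then show "v \<in> amax V w'" using \<open>v \<in> amax V w\<close> hull_inc[of _ V] unfolding amax_def by auto
  qed
next
  assume H: "amax V w \<subseteq> amax V w'"
  have P: "polytope (convex hull V)" "convex hull V \<noteq> {}" using assms polytope_hull by auto
  have "amax (convex hull V) w face_of convex hull V" by (rule amax_face[OF P])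
  then obtain V' where V': "V' \<subseteq> V" "amax (convex hull V) w = convex hull V'"
    using face_of_convex_hull_subset[of V] assms finite_imp_compact by metis
  have "V' \<subseteq> amax V w"
    using V' hull_inc[of _ V] hull_inc[of _ V'] unfolding amax_def by blast
  then have "V' \<subseteq> amax (convex hull V) w'" using H amax_V_hull by blast
  moreover have "convex (amax (convex hull V) w')"
    using amax_face[OF P] face_of_imp_convex by blast
  ultimately have "convex hull V' \<subseteq> amax (convex hull V) w'"
    by (simp add: hull_minimal)
  then show "amax (convex hull V) w \<subseteq> amax (convex hull V) w'" using V' by simp
qed

definition MS :: "'n set \<Rightarrow> real ^ 'n \<Rightarrow> 'n set" where
  "MS S w = {s\<in>S. \<forall>t\<in>S. w $ t \<le> w $ s}"

lemma amax_axis: "amax ((\<lambda>s. axis s (1::real)) ` S) w = (\<lambda>s. axis s 1) ` MS S w"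
  unfolding amax_def MS_def by (auto simp: inner_axis)

lemma simplex_props:
  fixes S :: "'n::finite set"
  assumes "S \<noteq> {}"
  shows "good (simplex_of S) \<and>
    ((amax (simplex_of S) w \<subseteq> amax (simplex_of S) w') \<longleftrightarrow> MS S w \<subseteq> MS S w')"
proof -
  let ?V = "(\<lambda>s. axis s (1::real)) ` S"
  have fin: "finite ?V" "?V \<noteq> {}" using assms by auto
  have inj: "inj (\<lambda>s. axis s (1::real))" by (auto intro: injI simp: axis_eq_axis)
  show ?thesis
    unfolding simplex_of_def
    using good_hull[OF fin]
    by (simp add: hull_rel[OF fin] amax_axis inj_image_subset_iff[OF inj])
qed



lemma walk_exists:
  assumes "R\<^sup>*\<^sup>* u v"
  shows "\<exists>xs. xs \<noteq> [] \<and> hd xs = u \<and> last xs = v \<and> successively R xs"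
  using assms
proof (induction rule: rtranclp_induct)
  case base
  then show ?case by (intro exI[of _ "[u]"]) auto
next
  case (step y z)
  then obtain xs where xs: "xs \<noteq> []" "hd xs = u" "last xs = y" "successively R xs" by blast
  show ?case using xs step(2)
    by (intro exI[of _ "xs @ [z]"]) (auto simp: successively_append_iff)
qed

lemma successively_take: "successively R xs \<Longrightarrow> successively R (take n xs)"
  by (metis append_take_drop_id successively_append_iff)

lemma successively_drop: "successively R xs \<Longrightarrow> successively R (drop n xs)"
  by (metis append_take_drop_id successively_append_iff)

lemma last_take_Suc: "i < length xs \<Longrightarrow> last (take (Suc i) xs) = xs ! i"
  by (simp add: take_Suc_conv_app_nth)

lemma shortest_walk:
  assumes "R\<^sup>*\<^sup>* s t"
  obtains xs where "xs \<noteq> []" "hd xs = s" "last xs = t" "successively R xs"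
    "\<And>i j. i < j \<Longrightarrow> j < length xs \<Longrightarrow> xs ! i \<noteq> xs ! j"
    "\<And>i j. Suc i < j \<Longrightarrow> j < length xs \<Longrightarrow> \<not> R (xs ! i) (xs ! j)"
proof -
  define W where "W = (\<lambda>xs. xs \<noteq> [] \<and> hd xs = s \<and> last xs = t \<and> successively R xs)"
  obtain xs0 where "W xs0" using walk_exists[OF assms] unfolding W_def by blast
  define xs where "xs = arg_min length W"
  have xsW: "W xs" and minl: "\<And>ys. W ys \<Longrightarrow> length xs \<le> length ys"
    using arg_min_nat_lemma[of W xs0 length, OF \<open>W xs0\<close>] unfolding xs_def by auto
  have ne: "xs \<noteq> []" and hd: "hd xs = s" and la: "last xs = t" and su: "successively R xs"
    using xsW unfolding W_def by auto
  have nochord: "\<not> R (xs ! i) (xs ! j)" if ij: "Suc i < j" "j < length xs" for i j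
  proof
    assume r: "R (xs ! i) (xs ! j)"
    define ys where "ys = take (Suc i) xs @ drop j xs"
    have "W ys" unfolding W_def ys_def
    proof (intro conjI)
      show "take (Suc i) xs @ drop j xs \<noteq> []" using ij by simp
      show "hd (take (Suc i) xs @ drop j xs) = s" using ij ne hd by (simp add: hd_append)
      show "last (take (Suc i) xs @ drop j xs) = t" using ij la by (simp add: last_drop)
      show "successively R (take (Suc i) xs @ drop j xs)"
        using ij r su by (simp add: successively_append_iff successively_take successively_drop
            last_take_Suc hd_drop_conv_nth)
    qed
    moreover have "length ys < length xs" using ij unfolding ys_def by simp
    ultimately show False using minl by fastforce
  qed
  have dist: "xs ! i \<noteq> xs ! j" if ij: "i < j" "j < length xs" for i j
  proof
    assume e: "xs ! i = xs ! j"
    define ys where "ys = take i xs @ drop j xs"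
    have "W ys" unfolding W_def ys_def
    proof (intro conjI)
      show "take i xs @ drop j xs \<noteq> []" using ij by simp
      show "hd (take i xs @ drop j xs) = s"
        using ij ne hd e by (cases i) (auto simp: hd_append hd_drop_conv_nth hd_conv_nth)
      show "last (take i xs @ drop j xs) = t" using ij la by (simp add: last_drop)
      show "successively R (take i xs @ drop j xs)"
      proof (cases i)
        case 0
        then show ?thesis using su by (simp add: successively_drop)
      next
        case (Suc k)
        have "R (xs ! k) (xs ! Suc k)" using su ij Suc successively_nth by fastforce
        then show ?thesis using ij su e Suc
          by (simp add: successively_append_iff successively_take successively_drop
            last_take_Suc hd_drop_conv_nth)
      qed
    qed
    moreover have "length ys < length xs" using ij unfolding ys_def by simp
    ultimately show False using minl by fastforce
  qed
  show ?thesis by (rule that[OF ne hd la su dist nochord])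
qed

lemma path_between:
  assumes sg: "simple_graph E" and ic: "induced_connected E S" and st: "s \<in> S" "t \<in> S"
  shows "\<exists>P. induced_path E P \<and> P \<subseteq> S \<and> s \<in> P \<and> t \<in> P"
proof -
  define R where "R = (\<lambda>x y. x \<in> S \<and> y \<in> S \<and> E x y)"
  have "R\<^sup>*\<^sup>* s t" using ic st unfolding induced_connected_def R_def by blast
  then obtain xs where ne: "xs \<noteq> []" and hd: "hd xs = s" and la: "last xs = t"
    and su: "successively R xs"
    and dist: "\<And>i j. i < j \<Longrightarrow> j < length xs \<Longrightarrow> xs ! i \<noteq> xs ! j"
    and nc: "\<And>i j. Suc i < j \<Longrightarrow> j < length xs \<Longrightarrow> \<not> R (xs ! i) (xs ! j)"
    by (rule shortest_walk[of R s t]) auto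
  have sym: "E u v \<Longrightarrow> E v u" for u v using sg unfolding simple_graph_def by blast
  have irr: "\<not> E v v" for v using sg unfolding simple_graph_def by blast
  have edge: "R (xs ! k) (xs ! Suc k)" if "Suc k < length xs" for k
    using su that successively_nth by fastforce
  have inS: "xs ! k \<in> S" if "k < length xs" for k
  proof (cases k)
    case 0 then show ?thesis using hd ne st by (simp add: hd_conv_nth)
  next
    case (Suc m) then show ?thesis using edge[of m] that unfolding R_def by auto
  qed
  have subS: "set xs \<subseteq> S" using inS by (auto simp: set_conv_nth)
  have distinct: "distinct xs"
    unfolding distinct_conv_nth by (metis dist linorder_neqE_nat)
  have card: "card (set xs) = length xs" using distinct by (simp add: distinct_card)
  have bij: "bij_betw ((!) xs) {0..<card (set xs)} (set xs)"
    using bij_betw_nth[OF distinct] card by (simp add: atLeast0LessThan)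
  have E_iff: "E (xs ! i) (xs ! j) \<longleftrightarrow> path_graph_edge i j"
    if "i < length xs" "j < length xs" for i j
  proof
    assume "path_graph_edge i j"
    then show "E (xs ! i) (xs ! j)"
      unfolding path_graph_edge_def using edge that sym unfolding R_def by auto
  next
    assume e: "E (xs ! i) (xs ! j)"
    then have r1: "R (xs ! i) (xs ! j)" and r2: "R (xs ! j) (xs ! i)"
      using inS that sym unfolding R_def by auto
    have "i \<noteq> j" using e irr by auto
    moreover have "\<not> Suc i < j" using nc r1 that by blast
    moreover have "\<not> Suc j < i" using nc r2 that by blast
    ultimately show "path_graph_edge i j" unfolding path_graph_edge_def by linarith
  qed
  have "induced_path E (set xs)"
    unfolding induced_path_def using ne bij E_iff card by (intro conjI exI[of _ "(!) xs"]) auto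
  moreover have "s \<in> set xs" using hd ne by auto
  moreover have "t \<in> set xs" using la ne by auto
  ultimately show ?thesis using subS by blast
qed

lemma path_connected:
  assumes sg: "simple_graph E" and ip: "induced_path E S"
  shows "induced_connected E S"
proof -
  define R where "R = (\<lambda>x y. x \<in> S \<and> y \<in> S \<and> E x y)"
  obtain f where ne: "S \<noteq> {}" and bij: "bij_betw f {0..<card S} S"
    and ed: "\<And>i j. i < card S \<Longrightarrow> j < card S \<Longrightarrow> E (f i) (f j) \<longleftrightarrow> path_graph_edge i j"
    using ip unfolding induced_path_def by blast
  have symR: "R x y \<Longrightarrow> R y x" for x y using sg unfolding R_def simple_graph_def by blast
  have fS: "i < card S \<Longrightarrow> f i \<in> S" for i using bij bij_betwE by fastforce
  have reach: "R\<^sup>*\<^sup>* (f 0) (f i)" if "i < card S" for i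
    using that
  proof (induction i)
    case 0 then show ?case by simp
  next
    case (Suc i)
    have "R (f i) (f (Suc i))" using Suc.prems fS ed[of i "Suc i"] unfolding R_def path_graph_edge_def
      by auto
    then show ?case using Suc by (meson Suc_lessD rtranclp.rtrancl_into_rtrancl)
  qed
  have bk: "R\<^sup>*\<^sup>* y x" if "R\<^sup>*\<^sup>* x y" for x y
    using that
  proof (induction rule: rtranclp_induct)
    case base then show ?case by simp
  next
    case (step y z) then show ?case using symR by (meson converse_rtranclp_into_rtranclp)
  qed
  have "R\<^sup>*\<^sup>* u v" if uv: "u \<in> S" "v \<in> S" for u v
  proof -
    obtain i j where "i < card S" "j < card S" "u = f i" "v = f j"
    proof -
      have "u \<in> f ` {0..<card S}" "v \<in> f ` {0..<card S}" using bij uv unfolding bij_betw_def by auto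
      then show ?thesis using that by (metis atLeastLessThan_iff imageE)
    qed
    then show ?thesis using reach bk by (meson rtranclp_trans)
  qed
  then show ?thesis unfolding induced_connected_def R_def using ne by blast
qed

lemma comb:
  assumes sg: "simple_graph E"
  shows "(\<forall>S. induced_connected E S \<longrightarrow> MS S w \<subseteq> MS S w') \<longleftrightarrow>
         (\<forall>S. induced_path E S \<longrightarrow> MS S w \<subseteq> MS S w')"
proof
  assume "\<forall>S. induced_connected E S \<longrightarrow> MS S w \<subseteq> MS S w'"
  then show "\<forall>S. induced_path E S \<longrightarrow> MS S w \<subseteq> MS S w'" using path_connected[OF sg] by blast
next
  assume H: "\<forall>S. induced_path E S \<longrightarrow> MS S w \<subseteq> MS S w'"
  show "\<forall>S. induced_connected E S \<longrightarrow> MS S w \<subseteq> MS S w'"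
  proof (intro allI impI subsetI)
    fix S s assume ic: "induced_connected E S" and s: "s \<in> MS S w"
    have "w' $ t \<le> w' $ s" if t: "t \<in> S" for t
    proof -
      obtain P where P: "induced_path E P" "P \<subseteq> S" "s \<in> P" "t \<in> P"
        using path_between[OF sg ic _ t] s unfolding MS_def by blast
      have "s \<in> MS P w" using s P unfolding MS_def by auto
      then have "s \<in> MS P w'" using H P by blast
      then show ?thesis using P unfolding MS_def by auto
    qed
    then show "s \<in> MS S w'" using s unfolding MS_def by auto
  qed
qed



lemma family_facts:
  fixes Pr :: "'n::finite set \<Rightarrow> bool"
  assumes ne: "\<forall>S. Pr S \<longrightarrow> S \<noteq> {}"
  defines "Q \<equiv> (\<Sum>S\<in>{S. Pr S}. simplex_of S)"
  shows "polytope Q" "Q \<noteq> {}"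
    "\<And>w w'. (amax Q w \<subseteq> amax Q w') \<longleftrightarrow> (\<forall>S. Pr S \<longrightarrow> MS S w \<subseteq> MS S w')"
proof -
  have fin: "finite {S :: 'n set. Pr S}" by simp
  have g: "\<forall>S\<in>{S. Pr S}. good (simplex_of S)" using ne simplex_props by blast
  note sf = sum_family[OF fin g, folded Q_def]
  show rel: "(amax Q w \<subseteq> amax Q w') \<longleftrightarrow> (\<forall>S. Pr S \<longrightarrow> MS S w \<subseteq> MS S w')" for w w'
  proof -
    have "(\<forall>S\<in>{S. Pr S}. amax (simplex_of S) w \<subseteq> amax (simplex_of S) w') \<longleftrightarrow>
          (\<forall>S. Pr S \<longrightarrow> MS S w \<subseteq> MS S w')"
      using ne simplex_props by (metis mem_Collect_eq)
    then show ?thesis using sf[of w w'] by blast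
  qed
  have "Q = (\<Sum>S\<in>{S. Pr S}. convex hull ((\<lambda>s. axis s (1::real)) ` S))"
    unfolding Q_def simplex_of_def by simp
  also have "\<dots> = convex hull (\<Sum>S\<in>{S. Pr S}. (\<lambda>s. axis s (1::real)) ` S)"
    by (simp add: convex_hull_set_sum)
  finally show "polytope Q" unfolding polytope_def
    by (intro exI[of _ "(\<Sum>S\<in>{S. Pr S}. (\<lambda>s. axis s (1::real)) ` S)"]) (simp add: finite_set_sum)
  show "Q \<noteq> {}" using sf unfolding good_def amax_def by blast
qed

theorem mainTheorem7:
  fixes E :: "'n::finite \<Rightarrow> 'n \<Rightarrow> bool"
  assumes "simple_graph E" and "connected_graph E"
  shows "normally_equivalent (Q_graph E) (QL_graph E)"
proof -
  have n1: "\<forall>S. induced_connected E S \<longrightarrow> S \<noteq> {}" unfolding induced_connected_def by blast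
  have n2: "\<forall>S. induced_path E S \<longrightarrow> S \<noteq> {}" unfolding induced_path_def by blast
  note F1 = family_facts[OF n1, folded Q_graph_def]
  note F2 = family_facts[OF n2, folded QL_graph_def]
  have "{w'. amax (Q_graph E) w \<subseteq> amax (Q_graph E) w'} = {w'. amax (QL_graph E) w \<subseteq> amax (QL_graph E) w'}" for w
    using F1(3) F2(3) comb[OF assms(1)] by auto
  then show ?thesis
    unfolding normally_equivalent_def normal_fan_amax[OF F1(1,2)] normal_fan_amax[OF F2(1,2)]
    by simp
qed

end
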